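(* Let $F$ be a free group of finite rank $N\ge2$ with free basis $B$, $X$ its Cayley graph with respect to $B$, and $r\in\mathbb{N}$. Let $P$ be a geodesic path in $X$ from $u\in V(X)$ to $v\in V(X)$ passing through the vertices $v_0=u,v_1,\dots,v_m=v$ in this order. Let $T_i\in\mathcal{R}_r(v_i)$ for $i=0,\dots,m$. If $T_{i-1}$ and $T_i$ are connectable for every $i=1,\dots,m$, then $T_0$ and $T_m$ are connectable.
   Context: $X$ is a tree with path metric in which each edge has length one; $\partial F=\partial X$. $\mathcal{H}(\partial F)$ is the set of closed subsets of $\partial F$ with at least two points; for $S\in\mathcal{H}(\partial F)$, $CH(S)$ is the union of all geodesic lines in $X$ joining two points of $S$. $B(v,r)$ is the closed ball of radius $r$ about $v$, and $B(u,v,r)=B(u,r)\cap B(v,r)$. $\mathcal{R}_r(v)$ is the set of subgraphs $T\subset B(v,r)$ with $v\in T$ such that $T=CH(S)\cap B(v,r)$ for some $S\in\mathcal{H}(\partial F)$. For $T_1\in\mathcal{R}_r(u)$ and $T_2\in\mathcal{R}_r(v)$, $T_1$ and $T_2$ are connectable if $T_1\cap B(u,v,r)=T_2\cap B(u,v,r)$ (in particular they are always connectable when $B(u,v,r)=\emptyset$). *)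

theory Defs
  imports Main
begin

(* Elements of F are
   reduced words; a letter is (b, s) with b in B, s = True meaning b^-1.
   The Cayley graph X w.r.t. B has vertex set the reduced words, and
   w is joined to w*x for every letter x; for reduced words w*x is either
   w @ [x] or w with its last letter deleted. *)

type_synonym 'b letter = "'b \<times> bool"
type_synonym 'b vert = "'b letter list"
(* a subgraph: (vertex set, edge set); edges are 2-element vertex sets *)
type_synonym 'b subgraph = "'b vert set \<times> 'b vert set set"

definition letters :: "'b set \<Rightarrow> 'b letter set" where
  "letters B = B \<times> UNIV"

definition cancels :: "'b letter \<Rightarrow> 'b letter \<Rightarrow> bool" where
  "cancels x y \<longleftrightarrow> fst x = fst y \<and> snd x \<noteq> snd y"

definition reduced :: "'b set \<Rightarrow> 'b vert \<Rightarrow> bool" where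
  "reduced B w \<longleftrightarrow> set w \<subseteq> letters B \<and>
     (\<forall>i. Suc i < length w \<longrightarrow> \<not> cancels (w ! i) (w ! Suc i))"

definition VX :: "'b set \<Rightarrow> 'b vert set" where
  "VX B = {w. reduced B w}"

definition adj :: "'b set \<Rightarrow> 'b vert \<Rightarrow> 'b vert \<Rightarrow> bool" where
  "adj B u w \<longleftrightarrow> u \<in> VX B \<and> w \<in> VX B \<and>
     ((\<exists>x. w = u @ [x]) \<or> (\<exists>x. u = w @ [x]))"

definition EdgX :: "'b set \<Rightarrow> 'b vert set set" where
  "EdgX B = {{u, w} | u w. adj B u w}"

definition walk :: "'b set \<Rightarrow> 'b vert \<Rightarrow> 'b vert \<Rightarrow> 'b vert list \<Rightarrow> bool" where
  "walk B u v ps \<longleftrightarrow> ps \<noteq> [] \<and> hd ps = u \<and> last ps = v \<and> set ps \<subseteq> VX B \<and>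
     (\<forall>i. Suc i < length ps \<longrightarrow> adj B (ps ! i) (ps ! Suc i))"

definition dX :: "'b set \<Rightarrow> 'b vert \<Rightarrow> 'b vert \<Rightarrow> nat" where
  "dX B u v = (LEAST n. \<exists>ps. walk B u v ps \<and> length ps = Suc n)"

definition geodesic_path :: "'b set \<Rightarrow> 'b vert \<Rightarrow> 'b vert \<Rightarrow> 'b vert list \<Rightarrow> bool" where
  "geodesic_path B u v vs \<longleftrightarrow> walk B u v vs \<and> length vs = Suc (dX B u v)"

definition bdry :: "'b set \<Rightarrow> (nat \<Rightarrow> 'b letter) set" where
  "bdry B = {\<xi>. (\<forall>n. \<xi> n \<in> letters B) \<and> (\<forall>n. \<not> cancels (\<xi> n) (\<xi> (Suc n)))}"

(* closed subsets of the boundary (cylinder topology) *)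
definition bdry_closed :: "'b set \<Rightarrow> (nat \<Rightarrow> 'b letter) set \<Rightarrow> bool" where
  "bdry_closed B S \<longleftrightarrow> S \<subseteq> bdry B \<and>
     (\<forall>\<xi>\<in>bdry B. (\<forall>k. \<exists>\<eta>\<in>S. \<forall>i<k. \<eta> i = \<xi> i) \<longrightarrow> \<xi> \<in> S)"

definition HF :: "'b set \<Rightarrow> (nat \<Rightarrow> 'b letter) set set" where
  "HF B = {S. bdry_closed B S \<and> (\<exists>\<xi>\<in>S. \<exists>\<eta>\<in>S. \<xi> \<noteq> \<eta>)}"

definition conv_to :: "(nat \<Rightarrow> 'b vert) \<Rightarrow> (nat \<Rightarrow> 'b letter) \<Rightarrow> bool" where
  "conv_to g \<xi> \<longleftrightarrow> (\<forall>k. \<exists>n0. \<forall>n\<ge>n0. k \<le> length (g n) \<and> take k (g n) = map \<xi> [0..<k])"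

definition geod_line :: "'b set \<Rightarrow> (int \<Rightarrow> 'b vert) \<Rightarrow> bool" where
  "geod_line B \<gamma> \<longleftrightarrow> (\<forall>i. \<gamma> i \<in> VX B) \<and> (\<forall>i j. dX B (\<gamma> i) (\<gamma> j) = nat \<bar>i - j\<bar>)"

definition line_joins :: "'b set \<Rightarrow> (int \<Rightarrow> 'b vert) \<Rightarrow> (nat \<Rightarrow> 'b letter) \<Rightarrow> (nat \<Rightarrow> 'b letter) \<Rightarrow> bool" where
  "line_joins B \<gamma> \<xi> \<eta> \<longleftrightarrow> geod_line B \<gamma> \<and>
     conv_to (\<lambda>n. \<gamma> (- int n)) \<xi> \<and> conv_to (\<lambda>n. \<gamma> (int n)) \<eta>"

definition CH :: "'b set \<Rightarrow> (nat \<Rightarrow> 'b letter) set \<Rightarrow> 'b subgraph" where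
  "CH B S =
    ({w. \<exists>\<gamma> \<xi> \<eta> i. \<xi> \<in> S \<and> \<eta> \<in> S \<and> line_joins B \<gamma> \<xi> \<eta> \<and> w = \<gamma> i},
     {e. \<exists>\<gamma> \<xi> \<eta> i. \<xi> \<in> S \<and> \<eta> \<in> S \<and> line_joins B \<gamma> \<xi> \<eta> \<and> e = {\<gamma> i, \<gamma> (i + 1)}})"

definition ballX :: "'b set \<Rightarrow> 'b vert \<Rightarrow> nat \<Rightarrow> 'b subgraph" where
  "ballX B v r = ({w \<in> VX B. dX B v w \<le> r}, {e \<in> EdgX B. \<forall>w\<in>e. dX B v w \<le> r})"

definition ball2X :: "'b set \<Rightarrow> 'b vert \<Rightarrow> 'b vert \<Rightarrow> nat \<Rightarrow> 'b subgraph" where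
  "ball2X B u v r = (fst (ballX B u r) \<inter> fst (ballX B v r), snd (ballX B u r) \<inter> snd (ballX B v r))"

definition sg_inter :: "'b subgraph \<Rightarrow> 'b subgraph \<Rightarrow> 'b subgraph" where
  "sg_inter G H = (fst G \<inter> fst H, snd G \<inter> snd H)"

definition sg_subset :: "'b subgraph \<Rightarrow> 'b subgraph \<Rightarrow> bool" where
  "sg_subset G H \<longleftrightarrow> fst G \<subseteq> fst H \<and> snd G \<subseteq> snd H"

definition Rr :: "'b set \<Rightarrow> nat \<Rightarrow> 'b vert \<Rightarrow> 'b subgraph set" where
  "Rr B r v = {T. sg_subset T (ballX B v r) \<and> v \<in> fst T \<and>
      (\<exists>S\<in>HF B. T = sg_inter (CH B S) (ballX B v r))}"

definition connectable :: "'b set \<Rightarrow> nat \<Rightarrow> 'b vert \<Rightarrow> 'b subgraph \<Rightarrow> 'b vert \<Rightarrow> 'b subgraph \<Rightarrow> bool" where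
  "connectable B r u T1 v T2 \<longleftrightarrow>
     sg_inter T1 (ball2X B u v r) = sg_inter T2 (ball2X B u v r)"

end

theory Submission
  imports Defs
begin

fun lcpl :: "'a list \<Rightarrow> 'a list \<Rightarrow> nat" where
  "lcpl (x#xs) (y#ys) = (if x = y then Suc (lcpl xs ys) else 0)"
| "lcpl _ _ = 0"

lemma lcpl_le1: "lcpl u w \<le> length u"
  by (induction u w rule: lcpl.induct) auto
lemma lcpl_le2: "lcpl u w \<le> length w"
  by (induction u w rule: lcpl.induct) auto
lemma lcpl_sym: "lcpl u w = lcpl w u"
  by (induction u w rule: lcpl.induct) auto
lemma lcpl_self: "lcpl u u = length u"
  by (induction u) auto
lemma lcpl_take: "take (lcpl u w) u = take (lcpl u w) w"
  by (induction u w rule: lcpl.induct) auto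
lemma lcpl_snoc: "lcpl u (a@[x]) = (if lcpl u a = length a \<and> length a < length u \<and> u ! length a = x
   then Suc (length a) else lcpl u a)"
proof (induction u arbitrary: a)
  case (Cons y u)
  then show ?case by (cases a) auto
qed simp
lemma lcpl_min: "min (lcpl u a) (lcpl a v) \<le> lcpl u v"
proof (induction u a arbitrary: v rule: lcpl.induct)
  case (1 x xs y ys)
  show ?case
  proof (cases v)
    case (Cons z zs)
    then show ?thesis using "1.IH"[of zs] by (auto simp: min_def split: if_splits)
  qed simp
qed auto

definition D :: "'a list \<Rightarrow> 'a list \<Rightarrow> nat" where
  "D u w = length u + length w - 2 * lcpl u w"

lemma D_sym: "D u w = D w u" unfolding D_def by (simp add: lcpl_sym)
lemma D_self: "D u u = 0" unfolding D_def by (simp add: lcpl_self)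

lemma D_tri: "D u v \<le> D u a + D a v"
  using lcpl_min[of u a v] lcpl_le1[of u a] lcpl_le2[of u a] lcpl_le1[of a v] lcpl_le2[of a v]
    lcpl_le1[of u v] lcpl_le2[of u v]
  unfolding D_def by (simp add: min_def split: if_splits)

lemma D_snoc: "(D w (p@[x]) + 1 = D w p \<and> lcpl w p = length p \<and> length p < length w \<and> w ! length p = x)
  \<or> (D w (p@[x]) = D w p + 1 \<and> lcpl w (p@[x]) = lcpl w p \<and> \<not>(lcpl w p = length p \<and> length p < length w \<and> w ! length p = x))"
  using lcpl_snoc[of w p x] lcpl_le1[of w p] lcpl_le2[of w p]
  unfolding D_def by (auto split: if_splits)

lemma adj_step: "adj B a b \<Longrightarrow> D w b = D w a + 1 \<or> D w a = D w b + 1"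
  unfolding adj_def using D_snoc by (metis)

lemma adj_sym: "adj B a b = adj B b a" unfolding adj_def by auto

lemma uniq: assumes "adj B p a" "adj B p c" "D w a < D w p" "D w c < D w p" shows "a = c"
proof -
  have A: "(\<exists>x. a = p @ [x]) \<or> (\<exists>x. p = a @ [x])" "(\<exists>x. c = p @ [x]) \<or> (\<exists>x. p = c @ [x])"
    using assms unfolding adj_def by auto
  show ?thesis
  proof (cases "\<exists>x. a = p @ [x]")
    case True
    then obtain x where x: "a = p@[x]" by blast
    with D_snoc[of w p x] assms have C: "lcpl w p = length p" "w ! length p = x" by auto
    show ?thesis
    proof (cases "\<exists>y. c = p @ [y]")
      case True
      then obtain y where y: "c = p@[y]" by blast
      with D_snoc[of w p y] assms have "w ! length p = y" by auto
      with C x y show ?thesis by simp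
    next
      case False
      with A obtain y where y: "p = c@[y]" by blast
      with D_snoc[of w c y] assms have "lcpl w p = lcpl w c" by auto
      with C y lcpl_le2[of w c] show ?thesis by simp
    qed
  next
    case False
    with A obtain x where x: "p = a@[x]" by blast
    show ?thesis
    proof (cases "\<exists>y. c = p @ [y]")
      case True
      then obtain y where y: "c = p@[y]" by blast
      with D_snoc[of w p y] assms have C: "lcpl w p = length p" by auto
      from x D_snoc[of w a x] assms have "lcpl w p = lcpl w a" by auto
      with C x lcpl_le2[of w a] show ?thesis by simp
    next
      case False
      with A obtain y where y: "p = c@[y]" by blast
      with x show ?thesis by simp
    qed
  qed
qed


lemma reduced_take: "w \<in> VX B \<Longrightarrow> take k w \<in> VX B"
  unfolding VX_def reduced_def
  by (auto dest: in_set_takeD)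

lemma walk_Cons: assumes "adj B u (hd ps)" "walk B (hd ps) v ps" shows "walk B u v (u#ps)"
proof -
  have ne: "ps \<noteq> []" using assms(2) unfolding walk_def by auto
  have uV: "u \<in> VX B" using assms(1) unfolding adj_def by auto
  show ?thesis unfolding walk_def
  proof (intro conjI allI impI)
    show "set (u # ps) \<subseteq> VX B" using uV assms(2) unfolding walk_def by auto
    show "last (u#ps) = v" using ne assms(2) unfolding walk_def by auto
    fix i assume i: "Suc i < length (u#ps)"
    show "adj B ((u # ps) ! i) ((u # ps) ! Suc i)"
    proof (cases i)
      case 0 then show ?thesis using assms(1) ne by (simp add: hd_conv_nth)
    next
      case (Suc j) then show ?thesis using assms(2) i unfolding walk_def by auto
    qed
  qed auto
qed

lemma walk_single: "w \<in> VX B \<Longrightarrow> walk B w w [w]"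
  unfolding walk_def by auto

lemma walk_up: assumes "w \<in> VX B"
  shows "k \<le> length w \<Longrightarrow> \<exists>ps. walk B (take k w) w ps \<and> length ps = Suc (length w - k)"
proof (induction "length w - k" arbitrary: k)
  case 0
  then have "take k w = w" by simp
  then show ?case using walk_single[OF assms] 0 by (intro exI[of _ "[w]"]) auto
next
  case (Suc n)
  then have k: "k < length w" by simp
  have "n = length w - Suc k" using Suc.hyps(2) by simp
  then have "\<exists>ps. walk B (take (Suc k) w) w ps \<and> length ps = Suc (length w - Suc k)"
    using Suc.hyps(1)[of "Suc k"] k by simp
  then obtain ps where
    ps: "walk B (take (Suc k) w) w ps" "length ps = Suc (length w - Suc k)" by auto
  have hd: "hd ps = take (Suc k) w" using ps(1) unfolding walk_def by auto
  have "adj B (take k w) (take (Suc k) w)"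
    unfolding adj_def using reduced_take[OF assms, of k] reduced_take[OF assms, of "Suc k"] k
    by (auto simp: take_Suc_conv_app_nth)
  then have "walk B (take k w) w (take k w # ps)" using walk_Cons[of B "take k w" ps w] ps hd by simp
  then show ?case using ps(2) k by (intro exI[of _ "take k w # ps"]) auto
qed

lemma walk_exists: assumes "u \<in> VX B" "w \<in> VX B"
  shows "\<exists>ps. walk B u w ps \<and> length ps = Suc (D u w)"
  using assms(1)
proof (induction u rule: rev_induct)
  case Nil
  have "lcpl [] w = 0" by simp
  then show ?case using walk_up[OF assms(2), of 0] by (simp add: D_def)
next
  case (snoc x u)
  have uV: "u \<in> VX B" using reduced_take[OF snoc.prems, of "length u"] by simp
  show ?case
  proof (cases "lcpl (u@[x]) w = length (u@[x])")
    case True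
    have le: "length (u@[x]) \<le> length w" using lcpl_le2[of "u@[x]" w] True by simp
    have t: "take (length (u@[x])) w = u@[x]" using lcpl_take[of "u@[x]" w] le unfolding True by (simp add: min_def)
    have "D (u@[x]) w = length w - length (u@[x])" unfolding D_def using True le by simp
    then show ?thesis using walk_up[OF assms(2) le] unfolding t by simp
  next
    case False
    have l: "lcpl (u@[x]) w = lcpl u w" using False lcpl_snoc[of w u x] lcpl_sym
      by (metis length_append_singleton)
    have "D (u@[x]) w = D u w + 1" unfolding D_def using l lcpl_le1[of u w] lcpl_le2[of u w] by simp
    moreover obtain ps where ps: "walk B u w ps" "length ps = Suc (D u w)" using snoc.IH[OF uV] by blast
    moreover have "hd ps = u" using ps unfolding walk_def by auto
    moreover have "adj B (u@[x]) u" unfolding adj_def using uV snoc.prems by auto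
    ultimately show ?thesis using walk_Cons[of B "u@[x]" ps w] by (intro exI[of _ "(u@[x]) # ps"]) auto
  qed
qed

lemma walk_lip: assumes "walk B u v ps"
  shows "i \<le> k \<Longrightarrow> k < length ps \<Longrightarrow> D (ps!i) (ps!k) \<le> k - i"
proof (induction k)
  case 0 then show ?case by (simp add: D_self)
next
  case (Suc k)
  show ?case
  proof (cases "i = Suc k")
    case True then show ?thesis by (simp add: D_self)
  next
    case False
    then have "i \<le> k" using Suc by simp
    with Suc have ih: "D (ps!i) (ps!k) \<le> k - i" by simp
    have "adj B (ps!k) (ps!Suc k)" using assms Suc.prems unfolding walk_def by auto
    from adj_step[OF this, of "ps!i"] ih \<open>i \<le> k\<close> show ?thesis by auto
  qed
qed

lemma dX_eq: assumes "u \<in> VX B" "w \<in> VX B" shows "dX B u w = D u w"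
  unfolding dX_def
proof (rule Least_equality)
  show "\<exists>ps. walk B u w ps \<and> length ps = Suc (D u w)" using walk_exists[OF assms] .
next
  fix n assume "\<exists>ps. walk B u w ps \<and> length ps = Suc n"
  then obtain ps where ps: "walk B u w ps" "length ps = Suc n" by blast
  have "ps!0 = u" "ps!n = w" using ps unfolding walk_def
    by (auto simp: hd_conv_nth last_conv_nth)
  then show "D u w \<le> n" using walk_lip[OF ps(1), of 0 n] ps(2) by simp
qed

lemma geo_no_back: assumes g: "geodesic_path B u v vs" and t: "Suc (Suc t) < length vs"
  shows "vs!t \<noteq> vs!(Suc (Suc t))"
proof
  assume eq: "vs!t = vs!(Suc (Suc t))"
  have w: "walk B u v vs" and len: "length vs = Suc (dX B u v)" using g unfolding geodesic_path_def by auto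
  have uv: "u \<in> VX B" "v \<in> VX B" "vs!0 = u" "vs!(length vs - 1) = v" using w unfolding walk_def
    by (auto simp: hd_conv_nth last_conv_nth)
  have len2: "length vs = Suc (D u v)" using len dX_eq[OF uv(1,2)] by simp
  have "D u (vs!t) \<le> t" using walk_lip[OF w, of 0 t] t uv by simp
  moreover have "D (vs!t) v \<le> length vs - 1 - Suc (Suc t)"
    using walk_lip[OF w, of "Suc (Suc t)" "length vs - 1"] t uv eq by simp
  ultimately show False using D_tri[of u v "vs!t"] len2 t by simp
qed

lemma mono_chain: "(\<forall>k. a \<le> k \<and> k < b \<longrightarrow> (g::nat\<Rightarrow>nat) k < g (Suc k)) \<Longrightarrow> a \<le> j \<Longrightarrow> j \<le> b \<Longrightarrow> g j \<le> g b"
proof (induction b)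
  case (Suc b)
  show ?case
  proof (cases "j = Suc b")
    case False
    then have "g j \<le> g b" using Suc by simp
    moreover have "g b < g (Suc b)" using Suc False by simp
    ultimately show ?thesis by simp
  qed simp
qed simp

lemma anti_chain: "(\<forall>k<j. (g::nat\<Rightarrow>nat) (Suc k) < g k) \<Longrightarrow> g j \<le> g 0"
proof (induction j)
  case (Suc j)
  then have "g j \<le> g 0" by simp
  moreover have "g (Suc j) < g j" using Suc.prems by simp
  ultimately show ?case by simp
qed simp

lemma valley:
  fixes g :: "nat \<Rightarrow> nat"
  assumes step: "\<forall>t<n. g (Suc t) = g t + 1 \<or> g t = g (Suc t) + 1"
    and nomax: "\<forall>t. Suc t < n \<longrightarrow> \<not> (g t < g (Suc t) \<and> g (Suc (Suc t)) < g (Suc t))"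
    and j: "j \<le> n"
  shows "g j \<le> max (g 0) (g n)"
proof (cases "\<exists>i<j. g i < g (Suc i)")
  case True
  then obtain i where i: "i < j" "g i < g (Suc i)" by blast
  have "\<forall>k. i \<le> k \<and> k < n \<longrightarrow> g k < g (Suc k)"
  proof (intro allI impI)
    fix k assume "i \<le> k \<and> k < n"
    then show "g k < g (Suc k)"
    proof (induction k)
      case 0 then show ?case using i by simp
    next
      case (Suc k)
      show ?case
      proof (cases "i = Suc k")
        case True then show ?thesis using i by simp
      next
        case False
        then have "g k < g (Suc k)" using Suc by simp
        moreover have "Suc k < n" using Suc.prems by simp
        ultimately have "\<not> g (Suc (Suc k)) < g (Suc k)" using nomax by blast
        moreover have "g (Suc (Suc k)) = g (Suc k) + 1 \<or> g (Suc k) = g (Suc (Suc k)) + 1"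
          using step Suc.prems by simp
        ultimately show ?thesis by linarith
      qed
    qed
  qed
  then have "g j \<le> g n" using mono_chain[of i n g j] i j by simp
  then show ?thesis by simp
next
  case False
  have "\<forall>k<j. g (Suc k) < g k"
  proof (intro allI impI)
    fix k assume k: "k < j"
    then have "g (Suc k) = g k + 1 \<or> g k = g (Suc k) + 1" using step j by simp
    moreover have "\<not> g k < g (Suc k)" using False k by blast
    ultimately show "g (Suc k) < g k" by linarith
  qed
  then show ?thesis using anti_chain[of j g] by simp
qed


lemma geo_convex:
  assumes g: "geodesic_path B u v vs" and len: "length vs = Suc m" and j: "Suc j \<le> m"
    and wV: "w \<in> VX B" and d0: "dX B (vs!0) w \<le> r" and d1: "dX B (vs!Suc j) w \<le> r"
  shows "dX B (vs!j) w \<le> r"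
proof -
  have wk: "walk B u v vs" using g unfolding geodesic_path_def by auto
  have inV: "\<And>i. i \<le> m \<Longrightarrow> vs!i \<in> VX B" using wk len unfolding walk_def
    by (metis less_Suc_eq_le nth_mem subsetD)
  have dXg: "\<And>i. i \<le> m \<Longrightarrow> dX B (vs!i) w = D w (vs!i)"
    using dX_eq[OF inV wV] D_sym by metis
  define g where "g t = D w (vs!t)" for t
  have "g j \<le> max (g 0) (g (Suc j))"
  proof (rule valley)
    show "\<forall>t<Suc j. g (Suc t) = g t + 1 \<or> g t = g (Suc t) + 1"
    proof (intro allI impI)
      fix t assume "t < Suc j"
      then have "adj B (vs!t) (vs!Suc t)" using wk len j unfolding walk_def by auto
      then show "g (Suc t) = g t + 1 \<or> g t = g (Suc t) + 1" unfolding g_def by (rule adj_step)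
    qed
    show "\<forall>t. Suc t < Suc j \<longrightarrow> \<not> (g t < g (Suc t) \<and> g (Suc (Suc t)) < g (Suc t))"
    proof (intro allI impI notI)
      fix t assume t: "Suc t < Suc j" and c: "g t < g (Suc t) \<and> g (Suc (Suc t)) < g (Suc t)"
      have a1: "adj B (vs!t) (vs!Suc t)" using wk len j t unfolding walk_def by auto
      have a2: "adj B (vs!Suc t) (vs!Suc (Suc t))" using wk len j t unfolding walk_def by auto
      have "vs!t = vs!Suc (Suc t)"
        using uniq[of B "vs!Suc t" "vs!t" "vs!Suc (Suc t)" w] a1 a2 c adj_sym unfolding g_def by metis
      moreover have "vs!t \<noteq> vs!Suc (Suc t)" using geo_no_back[OF g] t len j by simp
      ultimately show False by simp
    qed
  qed simp
  then show ?thesis using d0 d1 dXg[of 0] dXg[of j] dXg[of "Suc j"] j unfolding g_def by simp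
qed

lemma EdgX_V: "e \<in> EdgX B \<Longrightarrow> x \<in> e \<Longrightarrow> x \<in> VX B"
  unfolding EdgX_def adj_def by auto

lemma ball_sub:
  assumes g: "geodesic_path B u v vs" and len: "length vs = Suc m" and j: "Suc j \<le> m"
  shows "fst (ball2X B (vs!0) (vs!Suc j) r) \<subseteq> fst (ball2X B (vs!0) (vs!j) r)
       \<and> snd (ball2X B (vs!0) (vs!Suc j) r) \<subseteq> snd (ball2X B (vs!0) (vs!j) r)
       \<and> fst (ball2X B (vs!0) (vs!Suc j) r) \<subseteq> fst (ball2X B (vs!j) (vs!Suc j) r)
       \<and> snd (ball2X B (vs!0) (vs!Suc j) r) \<subseteq> snd (ball2X B (vs!j) (vs!Suc j) r)"
  using geo_convex[OF g len j] EdgX_V unfolding ball2X_def ballX_def by fastforce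

lemma sg_restrict:
  assumes "sg_inter A Y = sg_inter C Y" "fst X \<subseteq> fst Y" "snd X \<subseteq> snd Y"
  shows "sg_inter A X = sg_inter C X"
proof -
  have "fst A \<inter> fst Y = fst C \<inter> fst Y" "snd A \<inter> snd Y = snd C \<inter> snd Y"
    using assms(1) unfolding sg_inter_def by auto
  then have "fst A \<inter> fst X = fst C \<inter> fst X" "snd A \<inter> snd X = snd C \<inter> snd X"
    using assms(2,3) by blast+
  then show ?thesis unfolding sg_inter_def by simp
qed

theorem mainTheorem5:
  fixes B :: "'b set" and N r m :: nat and u v :: "'b vert"
    and vs :: "'b vert list" and T :: "nat \<Rightarrow> 'b subgraph"
  assumes "finite B" and "card B = N" and "N \<ge> 2"
    and "u \<in> VX B" and "v \<in> VX B"
    and "geodesic_path B u v vs" and "length vs = Suc m"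
    and "\<forall>i\<le>m. T i \<in> Rr B r (vs ! i)"
    and "\<forall>i\<in>{1..m}. connectable B r (vs ! (i - 1)) (T (i - 1)) (vs ! i) (T i)"
  shows "connectable B r (vs ! 0) (T 0) (vs ! m) (T m)"
proof -
  have "j \<le> m \<Longrightarrow> sg_inter (T 0) (ball2X B (vs!0) (vs!j) r) = sg_inter (T j) (ball2X B (vs!0) (vs!j) r)" for j
  proof (induction j)
    case (Suc j)
    note S = ball_sub[OF assms(6,7) Suc.prems]
    have ih: "sg_inter (T 0) (ball2X B (vs!0) (vs!j) r) = sg_inter (T j) (ball2X B (vs!0) (vs!j) r)"
      using Suc by simp
    have c: "sg_inter (T j) (ball2X B (vs!j) (vs!Suc j) r) = sg_inter (T (Suc j)) (ball2X B (vs!j) (vs!Suc j) r)"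
      using bspec[OF assms(9), of "Suc j"] Suc.prems unfolding connectable_def by simp
    show ?case using sg_restrict[OF ih] sg_restrict[OF c] S by metis
  qed simp
  then show ?thesis unfolding connectable_def by simp
qed

end
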